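(* Let $p\in B(\mathcal H)$ be selfadjoint and suppose that for every $\omega\in\{\omega_-,\omega_+,\omega_1,\dots,\omega_{N-1}\}$, $$L_{-,\omega}\,p=p\,L_{-,\omega}\,p\qquad\text{and}\qquad L_{-,\omega}^*\,p=p\,L_{-,\omega}^*\,p.$$ Then $p$ is harmonic for $(\mathcal T_t^* )_{t\ge0}$.
   Context: Fix integers $N\ge 2$ and $n_1\ge n_2\ge\dots\ge n_N\ge 1$. Let $\mathcal H$ be a finite-dimensional complex Hilbert space with orthonormal basis $\{|-\rangle,|+\rangle\}\cup\{|a_k\rangle:1\le k\le N,\ 0\le a\le n_k-1\}$. For vectors $x,y$, $|x\rangle\langle y|$ denotes the operator $u\mapsto\langle y,u\rangle x$. Put $E_k=\mathrm{span}\{|a_k\rangle:0\le a\le n_k-1\}$, $P_k$ the orthogonal projection onto $E_k$, $P_\pm=|\pm\rangle\langle\pm|$, $\zeta_k=e^{2\pi i/n_k}$, and $\varphi_{a_k}=n_k^{-1/2}\sum_{b=0}^{n_k-1}\zeta_k^{-ba}|b_k\rangle$. For $1\le k\le N-1$ let $Z_k=n_k^{-1/2}\sum_{b=0}^{n_{k+1}-1}\sum_{a=0}^{n_k-1}\zeta_k^{ba}|b_{k+1}\rangle\langle a_k|$, $|Z|_k=Z_k^*Z_k$. Let $\omega$ range over $\{\omega_+,\omega_-,\omega_1,\dots,\omega_{N-1}\}$ and let $\Gamma_{\pm,\omega}>0$, $\gamma_{\pm,\omega}\in\mathbb R$ be constants. Kraus operators: $L_{-,\omega_+}=\sqrt{n_1\Gamma_{-,\omega_+}}|\varphi_{0_1}\rangle\langle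 +|$, $L_{+,\omega_+}=\sqrt{n_1\Gamma_{+,\omega_+}}|+\rangle\langle\varphi_{0_1}|$, $L_{-,\omega_k}=\sqrt{\Gamma_{-,\omega_k}}Z_k$, $L_{+,\omega_k}=\sqrt{\Gamma_{+,\omega_k}}Z_k^*$, $L_{-,\omega_-}=\sqrt{\Gamma_{-,\omega_-}}|-\rangle\langle\varphi_{0_N}|$, $L_{+,\omega_-}=0$. $H_{\mathrm{eff}}=n_1\gamma_{-,\omega_+}P_+-n_1\gamma_{+,\omega_+}|\varphi_{0_1}\rangle\langle\varphi_{0_1}|+\gamma_{-,\omega_-}|\varphi_{0_N}\rangle\langle\varphi_{0_N}|-\gamma_{+,\omega_-}P_-+\sum_{k=1}^{N-1}(\gamma_{-,\omega_k}|Z|_k-\gamma_{+,\omega_k}P_{k+1})$. The dual generator is $\mathcal L^*(x)=i[H_{\mathrm{eff}},x]+\sum_{\omega}\sum_{\epsilon=\pm}\big(L_{\epsilon,\omega}^*xL_{\epsilon,\omega}-\tfrac12\{L_{\epsilon,\omega}^*L_{\epsilon,\omega},x\}\big)$ and $\mathcal T_t^*=e^{t\mathcal L^*}$. A selfadjoint $p$ is harmonic if $\mathcal T_t^*(p)=p$ for all $t\ge0$. *)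

theory Defs
  imports Complex_Main
begin

text \<open>Basis labels: Mn = |->, Pl = |+>, B k a = |a_k>.  Operators on H are
  represented as complex matrices indexed by labels, supported on the valid
  label set Idx N n.\<close>

datatype idx = Mn | Pl | B nat nat

text \<open>Bohr frequencies: OPl = omega_+, OMi = omega_-, OK k = omega_k.\<close>
datatype om = OPl | OMi | OK nat

type_synonym cmat = "idx \<Rightarrow> idx \<Rightarrow> complex"
type_synonym cvec = "idx \<Rightarrow> complex"

definition Idx :: "nat \<Rightarrow> (nat \<Rightarrow> nat) \<Rightarrow> idx set" where
  "Idx N n = {Mn, Pl} \<union> {B k a | k a. 1 \<le> k \<and> k \<le> N \<and> a < n k}"

definition Om :: "nat \<Rightarrow> om set" where
  "Om N = {OPl, OMi} \<union> OK ` {1..<N}"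

definition mmul :: "idx set \<Rightarrow> cmat \<Rightarrow> cmat \<Rightarrow> cmat" where
  "mmul I A X = (\<lambda>i j. \<Sum>l\<in>I. A i l * X l j)"

definition adj :: "cmat \<Rightarrow> cmat" where
  "adj A = (\<lambda>i j. cnj (A j i))"

definition scal :: "complex \<Rightarrow> cmat \<Rightarrow> cmat" where
  "scal c A = (\<lambda>i j. c * A i j)"

text \<open>outer x y = |x><y|, with <y,u> antilinear in y.\<close>
definition outer :: "cvec \<Rightarrow> cvec \<Rightarrow> cmat" where
  "outer x y = (\<lambda>i j. x i * cnj (y j))"

definition ket :: "idx \<Rightarrow> cvec" where
  "ket b = (\<lambda>i. if i = b then 1 else 0)"

definition zeta :: "(nat \<Rightarrow> nat) \<Rightarrow> nat \<Rightarrow> complex" where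
  "zeta n k = exp (2 * complex_of_real pi * \<i> / of_nat (n k))"

definition phi :: "(nat \<Rightarrow> nat) \<Rightarrow> nat \<Rightarrow> nat \<Rightarrow> cvec" where
  "phi n k a = (\<lambda>i. case i of
      B k' b \<Rightarrow> if k' = k \<and> b < n k
                 then inverse (zeta n k ^ (b * a)) / complex_of_real (sqrt (real (n k)))
                 else 0
    | _ \<Rightarrow> 0)"

definition Zop :: "(nat \<Rightarrow> nat) \<Rightarrow> nat \<Rightarrow> cmat" where
  "Zop n k = (\<lambda>i j. case (i, j) of
      (B k1 b, B k0 a) \<Rightarrow> if k1 = Suc k \<and> k0 = k \<and> b < n (Suc k) \<and> a < n k
                          then zeta n k ^ (b * a) / complex_of_real (sqrt (real (n k)))
                          else 0
    | _ \<Rightarrow> 0)"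

definition Pk :: "(nat \<Rightarrow> nat) \<Rightarrow> nat \<Rightarrow> cmat" where
  "Pk n k = (\<lambda>i j. if i = j \<and> (\<exists>a < n k. i = B k a) then 1 else 0)"

definition Pproj :: "idx \<Rightarrow> cmat" where
  "Pproj b = outer (ket b) (ket b)"

fun Lm :: "nat \<Rightarrow> (nat \<Rightarrow> nat) \<Rightarrow> (om \<Rightarrow> real) \<Rightarrow> om \<Rightarrow> cmat" where
  "Lm N n Gm OPl = scal (complex_of_real (sqrt (real (n 1) * Gm OPl))) (outer (phi n 1 0) (ket Pl))"
| "Lm N n Gm (OK k) = scal (complex_of_real (sqrt (Gm (OK k)))) (Zop n k)"
| "Lm N n Gm OMi = scal (complex_of_real (sqrt (Gm OMi))) (outer (ket Mn) (phi n N 0))"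

fun Lp :: "nat \<Rightarrow> (nat \<Rightarrow> nat) \<Rightarrow> (om \<Rightarrow> real) \<Rightarrow> om \<Rightarrow> cmat" where
  "Lp N n Gp OPl = scal (complex_of_real (sqrt (real (n 1) * Gp OPl))) (outer (ket Pl) (phi n 1 0))"
| "Lp N n Gp (OK k) = scal (complex_of_real (sqrt (Gp (OK k)))) (adj (Zop n k))"
| "Lp N n Gp OMi = (\<lambda>i j. 0)"

definition Heff :: "nat \<Rightarrow> (nat \<Rightarrow> nat) \<Rightarrow> (om \<Rightarrow> real) \<Rightarrow> (om \<Rightarrow> real) \<Rightarrow> cmat" where
  "Heff N n gm gp = (\<lambda>i j.
      complex_of_real (real (n 1) * gm OPl) * Pproj Pl i j
    - complex_of_real (real (n 1) * gp OPl) * outer (phi n 1 0) (phi n 1 0) i j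
    + complex_of_real (gm OMi) * outer (phi n N 0) (phi n N 0) i j
    - complex_of_real (gp OMi) * Pproj Mn i j
    + (\<Sum>k\<in>{1..<N}. complex_of_real (gm (OK k)) * mmul (Idx N n) (adj (Zop n k)) (Zop n k) i j
                   - complex_of_real (gp (OK k)) * Pk n (Suc k) i j))"

definition Diss :: "idx set \<Rightarrow> cmat \<Rightarrow> cmat \<Rightarrow> cmat" where
  "Diss I L x = (\<lambda>i j. mmul I (mmul I (adj L) x) L i j
      - (mmul I (mmul I (adj L) L) x i j + mmul I x (mmul I (adj L) L) i j) / 2)"

definition Lstar :: "nat \<Rightarrow> (nat \<Rightarrow> nat) \<Rightarrow> (om \<Rightarrow> real) \<Rightarrow> (om \<Rightarrow> real)
    \<Rightarrow> (om \<Rightarrow> real) \<Rightarrow> (om \<Rightarrow> real) \<Rightarrow> cmat \<Rightarrow> cmat" where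
  "Lstar N n Gm Gp gm gp x = (\<lambda>i j.
      \<i> * (mmul (Idx N n) (Heff N n gm gp) x i j - mmul (Idx N n) x (Heff N n gm gp) i j)
    + (\<Sum>w\<in>Om N. Diss (Idx N n) (Lm N n Gm w) x i j + Diss (Idx N n) (Lp N n Gp w) x i j))"

definition Tstar :: "nat \<Rightarrow> (nat \<Rightarrow> nat) \<Rightarrow> (om \<Rightarrow> real) \<Rightarrow> (om \<Rightarrow> real)
    \<Rightarrow> (om \<Rightarrow> real) \<Rightarrow> (om \<Rightarrow> real) \<Rightarrow> real \<Rightarrow> cmat \<Rightarrow> cmat" where
  "Tstar N n Gm Gp gm gp t x = (\<lambda>i j.
      \<Sum>m. complex_of_real (t ^ m / fact m) * ((Lstar N n Gm Gp gm gp ^^ m) x) i j)"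

definition harmonic :: "nat \<Rightarrow> (nat \<Rightarrow> nat) \<Rightarrow> (om \<Rightarrow> real) \<Rightarrow> (om \<Rightarrow> real)
    \<Rightarrow> (om \<Rightarrow> real) \<Rightarrow> (om \<Rightarrow> real) \<Rightarrow> cmat \<Rightarrow> bool" where
  "harmonic N n Gm Gp gm gp p \<longleftrightarrow> (\<forall>t\<ge>0. Tstar N n Gm Gp gm gp t p = p)"

end

theory Submission
  imports Defs "HOL-Analysis.Analysis"
begin


lemma zeta_pow: "zeta n k ^ m = exp (2 * complex_of_real pi * \<i> * of_nat m / of_nat (n k))"
  unfolding zeta_def by (simp add: exp_of_nat_mult[symmetric] mult_ac)

lemma zeta_cnj_mult: "cnj (zeta n k) * zeta n k = 1"
proof -
  have "cnj (zeta n k) = exp (- (2 * complex_of_real pi * \<i> / of_nat (n k)))"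
    unfolding zeta_def by (simp add: exp_cnj)
  then show ?thesis unfolding zeta_def by (simp add: exp_add[symmetric])
qed

lemma roots_sum:
  assumes "n k \<ge> 1" "b < n k" "b' < n k"
  shows "(\<Sum>a<n k. zeta n k ^ (b * a) * cnj (zeta n k ^ (b' * a))) = (if b = b' then of_nat (n k) else 0)"
proof -
  define z where "z = zeta n k"
  define w where "w = z ^ b * cnj z ^ b'"
  have cz: "cnj z * z = 1" unfolding z_def by (rule zeta_cnj_mult)
  have zn: "z ^ n k = 1" unfolding z_def zeta_pow using assms(1) by simp
  have czn: "cnj z ^ n k = 1" using zn by (metis complex_cnj_one complex_cnj_power)
  have tm: "z ^ (b * a) * cnj (z ^ (b' * a)) = w ^ a" for a
    by (simp add: w_def power_mult power_mult_distrib mult.commute power_commutes flip: power_mult)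
  have wn: "w ^ n k = 1"
    by (simp add: w_def power_mult_distrib power_mult[symmetric] mult.commute[of _ "n k"] power_mult zn czn)
  have S: "(\<Sum>a<n k. zeta n k ^ (b * a) * cnj (zeta n k ^ (b' * a))) = (\<Sum>a<n k. w ^ a)"
    using tm unfolding z_def by presburger
  have "(\<Sum>a<n k. w ^ a) = (if b = b' then of_nat (n k) else 0)"
  proof (cases "b = b'")
    case True
    have "w = (cnj z * z) ^ b" by (simp add: w_def True power_mult_distrib mult.commute)
    then have "w = 1" using cz by simp
    then show ?thesis using True by simp
  next
    case False
    have "w \<noteq> 1"
    proof
      assume "w = 1"
      then have "w * z ^ b' = z ^ b'" by simp
      moreover have "w * z ^ b' = z ^ b * (cnj z * z) ^ b'"
        by (simp add: w_def power_mult_distrib mult_ac)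
      ultimately have "z ^ b = z ^ b'" using cz by simp
      then have "b mod n k = b' mod n k"
        unfolding z_def zeta_pow using complex_root_unity_eq[OF assms(1)] by simp
      then show False using assms False by simp
    qed
    then show ?thesis using False by (simp add: geometric_sum wn)
  qed
  then show ?thesis by (subst S)
qed


lemma mmul_assoc: "mmul I (mmul I A Y) W = mmul I A (mmul I Y W)"
proof (rule ext, rule ext)
  fix i j
  have "(\<Sum>l\<in>I. (\<Sum>m\<in>I. A i m * Y m l) * W l j) = (\<Sum>l\<in>I. \<Sum>m\<in>I. A i m * Y m l * W l j)"
    by (simp add: sum_distrib_right)
  also have "\<dots> = (\<Sum>m\<in>I. \<Sum>l\<in>I. A i m * Y m l * W l j)" by (rule sum.swap)
  also have "\<dots> = (\<Sum>m\<in>I. A i m * (\<Sum>l\<in>I. Y m l * W l j))"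
    by (simp add: sum_distrib_left mult.assoc)
  finally show "mmul I (mmul I A Y) W i j = mmul I A (mmul I Y W) i j" by (simp add: mmul_def)
qed

lemma adj_mmul: "adj (mmul I A Y) = mmul I (adj Y) (adj A)"
  by (simp add: adj_def mmul_def mult.commute fun_eq_iff)

lemma adj_adj[simp]: "adj (adj A) = A" by (simp add: adj_def)

lemma adj_scal: "adj (scal c A) = scal (cnj c) (adj A)" by (simp add: adj_def scal_def fun_eq_iff)

lemma adj_outer: "adj (outer x y) = outer y x" by (simp add: adj_def outer_def fun_eq_iff mult.commute)

lemma mmul_scal_left: "mmul I (scal c A) Y = scal c (mmul I A Y)"
  by (simp add: mmul_def scal_def fun_eq_iff sum_distrib_left mult.assoc)

lemma mmul_scal_right: "mmul I A (scal c Y) = scal c (mmul I A Y)"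
  by (simp add: mmul_def scal_def fun_eq_iff sum_distrib_left mult_ac)

lemma scal_scal: "scal c (scal d A) = scal (c * d) A" by (simp add: scal_def fun_eq_iff mult.assoc)

lemma scal_one[simp]: "scal 1 A = A" by (simp add: scal_def)

lemma mmul_outer: "mmul I (outer x y) (outer u v) = scal (\<Sum>l\<in>I. cnj (y l) * u l) (outer x v)"
  by (simp add: mmul_def outer_def scal_def fun_eq_iff sum_distrib_left sum_distrib_right mult_ac)

definition commp :: "idx set \<Rightarrow> cmat \<Rightarrow> cmat \<Rightarrow> bool" where
  "commp I p A \<longleftrightarrow> mmul I A p = mmul I p A"

lemma comm_mmul: "commp I p A \<Longrightarrow> commp I p Y \<Longrightarrow> commp I p (mmul I A Y)"
  unfolding commp_def by (metis mmul_assoc)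

lemma comm_scal: "commp I p A \<Longrightarrow> commp I p (scal c A)"
  unfolding commp_def by (simp add: mmul_scal_left mmul_scal_right)

lemma comm_scal_rev: "c \<noteq> 0 \<Longrightarrow> commp I p (scal c A) \<Longrightarrow> commp I p A"
  using comm_scal[of I p "scal c A" "inverse c"] by (simp add: scal_scal)

lemma comm_add: "commp I p A \<Longrightarrow> commp I p Y \<Longrightarrow> commp I p (\<lambda>i j. A i j + Y i j)"
  unfolding commp_def mmul_def by (simp add: fun_eq_iff distrib_left distrib_right sum.distrib)

lemma comm_diff: "commp I p A \<Longrightarrow> commp I p Y \<Longrightarrow> commp I p (\<lambda>i j. A i j - Y i j)"
  unfolding commp_def mmul_def by (simp add: fun_eq_iff left_diff_distrib right_diff_distrib sum_subtractf)

lemma comm_cmul: "commp I p A \<Longrightarrow> commp I p (\<lambda>i j. c * A i j)"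
  using comm_scal[of I p A c] by (simp add: scal_def)

lemma comm_sum: "(\<And>k. k \<in> K \<Longrightarrow> commp I p (F k)) \<Longrightarrow> commp I p (\<lambda>i j. \<Sum>k\<in>K. F k i j)"
proof -
  assume h: "\<And>k. k \<in> K \<Longrightarrow> commp I p (F k)"
  have "mmul I (\<lambda>i j. \<Sum>k\<in>K. F k i j) p = (\<lambda>i j. \<Sum>k\<in>K. mmul I (F k) p i j)"
    by (simp add: mmul_def fun_eq_iff sum_distrib_right sum.swap[of _ I])
  also have "\<dots> = (\<lambda>i j. \<Sum>k\<in>K. mmul I p (F k) i j)"
    using h unfolding commp_def by (simp add: fun_eq_iff)
  also have "\<dots> = mmul I p (\<lambda>i j. \<Sum>k\<in>K. F k i j)"
    by (simp add: mmul_def fun_eq_iff sum_distrib_left sum.swap[of _ I])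
  finally show ?thesis unfolding commp_def .
qed

lemma comm_zero: "commp I p (\<lambda>i j. 0)"
  by (simp add: commp_def mmul_def)

lemma comm_adj: "adj p = p \<Longrightarrow> commp I p A \<Longrightarrow> commp I p (adj A)"
  unfolding commp_def by (metis adj_mmul)

lemma comm_from1:
  assumes "adj p = p" "mmul I (adj L) p = mmul I p (mmul I (adj L) p)"
    "mmul I L p = mmul I p (mmul I L p)"
  shows "commp I p L"
proof -
  have "mmul I p L = adj (mmul I (adj L) p)" using assms(1) by (simp add: adj_mmul)
  also have "\<dots> = adj (mmul I p (mmul I (adj L) p))" using assms(2) by simp
  also have "\<dots> = mmul I (mmul I p L) p" using assms(1) by (simp add: adj_mmul)
  also have "\<dots> = mmul I L p"
    using assms(3) by (simp add: mmul_assoc)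
  finally show ?thesis unfolding commp_def by simp
qed

lemma Diss_zero:
  assumes "commp I p L" "commp I p (adj L)"
  shows "Diss I L p = (\<lambda>i j. 0)"
proof -
  have a: "mmul I (mmul I (adj L) p) L = mmul I p (mmul I (adj L) L)"
    using assms(2) unfolding commp_def by (simp add: mmul_assoc)
  have b: "mmul I (mmul I (adj L) L) p = mmul I p (mmul I (adj L) L)"
    using assms unfolding commp_def by (metis mmul_assoc)
  have c: "mmul I p (mmul I (adj L) L) = mmul I p (mmul I (adj L) L)" ..
  show ?thesis unfolding Diss_def a b by (simp add: fun_eq_iff)
qed



lemma finite_Idx: "finite (Idx N n)"
proof -
  have "Idx N n \<subseteq> {Mn, Pl} \<union> (\<lambda>(k, a). B k a) ` (SIGMA k:{1..N}. {..<n k})"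
    unfolding Idx_def by auto
  moreover have "finite ({Mn, Pl} \<union> (\<lambda>(k, a). B k a) ` (SIGMA k:{1..N}. {..<n k}))"
    by auto
  ultimately show ?thesis by (rule finite_subset)
qed

lemma B_in_Idx: "1 \<le> k \<Longrightarrow> k \<le> N \<Longrightarrow> a < n k \<Longrightarrow> B k a \<in> Idx N n"
  unfolding Idx_def by auto

lemma Pl_in_Idx: "Pl \<in> Idx N n" and Mn_in_Idx: "Mn \<in> Idx N n"
  unfolding Idx_def by auto

lemma sum_reindex_B:
  assumes "finite I" "B k ` {..<m} \<subseteq> I" "\<And>l. l \<in> I \<Longrightarrow> l \<notin> B k ` {..<m} \<Longrightarrow> f l = 0"
  shows "(\<Sum>l\<in>I. f l) = (\<Sum>a<m. f (B k a))"
proof -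
  have "(\<Sum>l\<in>I. f l) = (\<Sum>l\<in>B k ` {..<m}. f l)"
    using assms by (intro sum.mono_neutral_right) auto
  also have "\<dots> = (\<Sum>a<m. f (B k a))"
    by (subst sum.reindex) (auto simp: inj_on_def)
  finally show ?thesis .
qed



lemma phi_norm:
  assumes "1 \<le> k" "k \<le> N" "n k \<ge> 1"
  shows "(\<Sum>l\<in>Idx N n. cnj (phi n k 0 l) * phi n k 0 l) = 1"
proof -
  have "(\<Sum>l\<in>Idx N n. cnj (phi n k 0 l) * phi n k 0 l) = (\<Sum>a<n k. cnj (phi n k 0 (B k a)) * phi n k 0 (B k a))"
  proof (rule sum_reindex_B[OF finite_Idx])
    show "B k ` {..<n k} \<subseteq> Idx N n" using assms B_in_Idx by blast
    fix l assume "l \<notin> B k ` {..<n k}"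
    then show "cnj (phi n k 0 l) * phi n k 0 l = 0"
      by (cases l) (auto simp: phi_def)
  qed
  also have "\<dots> = (\<Sum>a<n k. 1 / of_nat (n k))"
  proof (rule sum.cong)
    fix a assume "a \<in> {..<n k}"
    then have "phi n k 0 (B k a) = 1 / complex_of_real (sqrt (real (n k)))"
      by (simp add: phi_def)
    moreover have "complex_of_real (sqrt (real (n k))) * complex_of_real (sqrt (real (n k))) = of_nat (n k)"
      by (simp flip: of_real_mult)
    ultimately show "cnj (phi n k 0 (B k a)) * phi n k 0 (B k a) = 1 / of_nat (n k)"
      by simp
  qed simp
  also have "\<dots> = 1" using assms(3) by simp
  finally show ?thesis .
qed
lemma ket_norm: assumes "b \<in> I" "finite I" shows "(\<Sum>l\<in>I. cnj (ket b l) * ket b l) = 1"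
proof -
  have "(\<Sum>l\<in>I. cnj (ket b l) * ket b l) = (\<Sum>l\<in>I. if l = b then 1 else 0)"
    by (rule sum.cong) (auto simp: ket_def)
  then show ?thesis using assms by simp
qed
lemma ZZ_adj:
  assumes "1 \<le> k" "k < N" "n (Suc k) \<le> n k" "n k \<ge> 1"
  shows "mmul (Idx N n) (Zop n k) (adj (Zop n k)) = Pk n (Suc k)"
proof (rule ext, rule ext)
  fix i j
  show "mmul (Idx N n) (Zop n k) (adj (Zop n k)) i j = Pk n (Suc k) i j"
  proof (cases "(\<exists>b. i = B (Suc k) b \<and> b < n (Suc k)) \<and> (\<exists>b. j = B (Suc k) b \<and> b < n (Suc k))")
    case True
    then obtain b b' where i: "i = B (Suc k) b" "b < n (Suc k)" and j: "j = B (Suc k) b'" "b' < n (Suc k)"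
      by blast
    define s where "s = complex_of_real (sqrt (real (n k)))"
    have ss: "s * s = of_nat (n k)" unfolding s_def
      by (simp flip: of_real_mult)
    have cs: "cnj s = s" unfolding s_def by simp
    have "mmul (Idx N n) (Zop n k) (adj (Zop n k)) i j = (\<Sum>l\<in>Idx N n. Zop n k i l * cnj (Zop n k j l))"
      by (simp add: mmul_def adj_def)
    also have "\<dots> = (\<Sum>a<n k. Zop n k i (B k a) * cnj (Zop n k j (B k a)))"
    proof (rule sum_reindex_B[OF finite_Idx])
      show "B k ` {..<n k} \<subseteq> Idx N n" using assms B_in_Idx by (metis image_subsetI lessThan_iff less_imp_le_nat)
      fix l assume "l \<notin> B k ` {..<n k}"
      then show "Zop n k i l * cnj (Zop n k j l) = 0"
        by (cases l) (auto simp: Zop_def i j)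
    qed
    also have "\<dots> = (\<Sum>a<n k. zeta n k ^ (b * a) * cnj (zeta n k ^ (b' * a))) / (s * s)"
      unfolding sum_divide_distrib
      by (rule sum.cong) (use i j assms in \<open>auto simp: Zop_def s_def[symmetric] cs\<close>)
    also have "\<dots> = (if b = b' then 1 else 0)"
      using roots_sum[of n k b b'] i j assms ss by simp
    also have "\<dots> = Pk n (Suc k) i j" using i j by (auto simp: Pk_def)
    finally show ?thesis .
  next
    case False
    have "Pk n (Suc k) i j = 0" using False by (auto simp: Pk_def)
    moreover have z: "Zop n k i l * cnj (Zop n k j l) = 0" for l
      using False by (cases i; cases j; cases l) (auto simp: Zop_def)
    have "(\<Sum>l\<in>Idx N n. Zop n k i l * cnj (Zop n k j l)) = 0"
      by (rule sum.neutral) (use z in blast)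
    ultimately show ?thesis by (simp add: mmul_def adj_def)
  qed
qed


lemma Lstar_zero: "Lstar N n Gm Gp gm gp (\<lambda>i j. 0) = (\<lambda>i j. 0)"
  by (simp add: Lstar_def mmul_def Diss_def)

lemma Lstar_pow_zero: "(Lstar N n Gm Gp gm gp ^^ m) (\<lambda>i j. 0) = (\<lambda>i j. 0)"
  by (induction m) (simp_all add: Lstar_zero)

theorem lemma3p2:
  fixes N :: nat and n :: "nat \<Rightarrow> nat" and Gm Gp gm gp :: "om \<Rightarrow> real" and p :: cmat
  assumes "N \<ge> 2"
    and "\<forall>k. 1 \<le> k \<and> k < N \<longrightarrow> n (Suc k) \<le> n k"
    and "\<forall>k. 1 \<le> k \<and> k \<le> N \<longrightarrow> n k \<ge> 1"
    and "\<forall>w\<in>Om N. Gm w > 0 \<and> Gp w > 0"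
    and "\<forall>i j. i \<notin> Idx N n \<or> j \<notin> Idx N n \<longrightarrow> p i j = 0"
    and "adj p = p"
    and "\<forall>w\<in>Om N.
           mmul (Idx N n) (Lm N n Gm w) p = mmul (Idx N n) p (mmul (Idx N n) (Lm N n Gm w) p)
         \<and> mmul (Idx N n) (adj (Lm N n Gm w)) p
             = mmul (Idx N n) p (mmul (Idx N n) (adj (Lm N n Gm w)) p)"
  shows "harmonic N n Gm Gp gm gp p"
  proof -
  let ?I = "Idx N n"
  let ?L = "Lstar N n Gm Gp gm gp"
  have fin: "finite ?I" by (rule finite_Idx)
  have hp: "adj p = p" by fact
  have OPl: "OPl \<in> Om N" and OMi: "OMi \<in> Om N" by (auto simp: Om_def)
  have OKm: "OK k \<in> Om N \<longleftrightarrow> k \<in> {1..<N}" for k by (auto simp: Om_def)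
  have cL: "commp ?I p (Lm N n Gm w) \<and> commp ?I p (adj (Lm N n Gm w))" if w: "w \<in> Om N" for w
  proof -
    from assms(7) w have h1: "mmul ?I (Lm N n Gm w) p = mmul ?I p (mmul ?I (Lm N n Gm w) p)"
      and h2: "mmul ?I (adj (Lm N n Gm w)) p = mmul ?I p (mmul ?I (adj (Lm N n Gm w)) p)" by auto
    show ?thesis using comm_from1[OF hp h2 h1] comm_from1[of p ?I "adj (Lm N n Gm w)", OF hp] h1 h2 by simp
  qed
  have n1: "n 1 \<ge> 1" and nN: "n N \<ge> 1" using assms(1,3) by auto
  have g1: "Gm OPl > 0" and g2: "Gm OMi > 0" using assms(4) OPl OMi by auto
  define c1 where "c1 = complex_of_real (sqrt (real (n 1) * Gm OPl))"
  define c2 where "c2 = complex_of_real (sqrt (Gm OMi))"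
  have c1: "c1 \<noteq> 0" "cnj c1 = c1" using n1 g1 unfolding c1_def by auto
  have c2: "c2 \<noteq> 0" "cnj c2 = c2" using g2 unfolding c2_def by auto
  have cA1: "commp ?I p (outer (phi n 1 0) (ket Pl))" "commp ?I p (outer (ket Pl) (phi n 1 0))"
  proof -
    have e: "Lm N n Gm OPl = scal c1 (outer (phi n 1 0) (ket Pl))" by (simp add: c1_def)
    have "adj (Lm N n Gm OPl) = scal c1 (outer (ket Pl) (phi n 1 0))" unfolding e using c1 by (simp add: adj_scal adj_outer)
    then show "commp ?I p (outer (phi n 1 0) (ket Pl))" "commp ?I p (outer (ket Pl) (phi n 1 0))"
      using cL[OF OPl] e comm_scal_rev[OF c1(1)] by auto
  qed
  have cA2: "commp ?I p (outer (ket Mn) (phi n N 0))" "commp ?I p (outer (phi n N 0) (ket Mn))"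
  proof -
    have e: "Lm N n Gm OMi = scal c2 (outer (ket Mn) (phi n N 0))" by (simp add: c2_def)
    have "adj (Lm N n Gm OMi) = scal c2 (outer (phi n N 0) (ket Mn))" unfolding e using c2 by (simp add: adj_scal adj_outer)
    then show "commp ?I p (outer (ket Mn) (phi n N 0))" "commp ?I p (outer (phi n N 0) (ket Mn))"
      using cL[OF OMi] e comm_scal_rev[OF c2(1)] by auto
  qed
  have cZ: "commp ?I p (Zop n k) \<and> commp ?I p (adj (Zop n k))" if k: "k \<in> {1..<N}" for k
  proof -
    have "Gm (OK k) > 0" using assms(4) k OKm by blast
    then have cc: "complex_of_real (sqrt (Gm (OK k))) \<noteq> 0" by simp
    have ok: "OK k \<in> Om N" using k OKm by blast
    have "commp ?I p (scal (complex_of_real (sqrt (Gm (OK k)))) (Zop n k))"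
      "commp ?I p (scal (complex_of_real (sqrt (Gm (OK k)))) (adj (Zop n k)))"
      using cL[OF ok] by (simp_all add: adj_scal)
    then show ?thesis using comm_scal_rev[OF cc] by blast
  qed
  have cLp: "commp ?I p (Lp N n Gp w) \<and> commp ?I p (adj (Lp N n Gp w))" if w: "w \<in> Om N" for w
  proof (cases w)
    case OPl
    then show ?thesis using cA1 by (auto simp: adj_scal adj_outer intro: comm_scal)
  next
    case OMi
    then show ?thesis by (simp add: comm_zero adj_def)
  next
    case (OK k)
    then have "k \<in> {1..<N}" using w OKm by blast
    then show ?thesis using cZ[of k] \<open>w = OK k\<close> by (auto simp: adj_scal intro: comm_scal)
  qed
  have ePl: "Pproj Pl = mmul ?I (outer (ket Pl) (phi n 1 0)) (outer (phi n 1 0) (ket Pl))"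
    using phi_norm[of 1 N n] n1 assms(1) by (simp add: mmul_outer Pproj_def)
  have ephi1: "outer (phi n 1 0) (phi n 1 0) = mmul ?I (outer (phi n 1 0) (ket Pl)) (outer (ket Pl) (phi n 1 0))"
    using ket_norm[OF Pl_in_Idx fin] by (simp add: mmul_outer)
  have eMn: "Pproj Mn = mmul ?I (outer (ket Mn) (phi n N 0)) (outer (phi n N 0) (ket Mn))"
    using phi_norm[of N N n] nN assms(1) by (simp add: mmul_outer Pproj_def)
  have ephiN: "outer (phi n N 0) (phi n N 0) = mmul ?I (outer (phi n N 0) (ket Mn)) (outer (ket Mn) (phi n N 0))"
    using ket_norm[OF Mn_in_Idx fin] by (simp add: mmul_outer)
  have cPl: "commp ?I p (Pproj Pl)" unfolding ePl using cA1 by (intro comm_mmul)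
  have cMn: "commp ?I p (Pproj Mn)" unfolding eMn using cA2 by (intro comm_mmul)
  have cphi1: "commp ?I p (outer (phi n 1 0) (phi n 1 0))" unfolding ephi1 using cA1 by (intro comm_mmul)
  have cphiN: "commp ?I p (outer (phi n N 0) (phi n N 0))" unfolding ephiN using cA2 by (intro comm_mmul)
  have cZZ: "commp ?I p (Pk n (Suc k))" if k: "k \<in> {1..<N}" for k
  proof -
    have "mmul ?I (Zop n k) (adj (Zop n k)) = Pk n (Suc k)"
      using k assms(2,3) by (intro ZZ_adj) auto
    then show ?thesis using cZ[OF k] comm_mmul by metis
  qed
  have cZsZ: "commp ?I p (mmul ?I (adj (Zop n k)) (Zop n k))" if k: "k \<in> {1..<N}" for k
    using cZ[OF k] comm_mmul by metis
  have cH: "commp ?I p (Heff N n gm gp)"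
    unfolding Heff_def
    by (intro comm_add comm_diff comm_cmul comm_sum cPl cMn cphi1 cphiN cZZ cZsZ)
  have D: "Diss ?I (Lm N n Gm w) p i j + Diss ?I (Lp N n Gp w) p i j = 0" if "w \<in> Om N" for w i j
    using Diss_zero cL[OF that] cLp[OF that] by simp
  have L0: "?L p = (\<lambda>i j. 0)"
  proof (rule ext, rule ext)
    fix i j
    have "(\<Sum>w\<in>Om N. Diss ?I (Lm N n Gm w) p i j + Diss ?I (Lp N n Gp w) p i j) = 0"
      by (rule sum.neutral) (use D in blast)
    moreover have "mmul ?I (Heff N n gm gp) p = mmul ?I p (Heff N n gm gp)"
      using cH by (simp add: commp_def)
    ultimately show "?L p i j = 0" by (simp add: Lstar_def)
  qed
  have Lm: "(?L ^^ Suc m) p = (\<lambda>i j. 0)" for m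
    by (simp only: funpow_Suc_right o_apply L0 Lstar_pow_zero)
  show ?thesis unfolding harmonic_def
  proof (intro allI impI)
    fix t :: real assume "t \<ge> 0"
    show "Tstar N n Gm Gp gm gp t p = p"
    proof (rule ext, rule ext)
      fix i j
      have "(\<lambda>m. complex_of_real (t ^ m / fact m) * (?L ^^ m) p i j) = (\<lambda>m. if m = 0 then p i j else 0)"
      proof
        fix m show "complex_of_real (t ^ m / fact m) * (?L ^^ m) p i j = (if m = 0 then p i j else 0)"
        proof (cases m)
          case (Suc q)
          have "(?L ^^ Suc q) p i j = 0" by (simp only: Lm)
          then show ?thesis using Suc by (simp del: funpow.simps)
        qed simp
      qed
      moreover have "(\<lambda>m. if m = 0 then p i j else 0) sums p i j"
        using sums_single[of 0 "\<lambda>_. p i j"] by simp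
      ultimately show "Tstar N n Gm Gp gm gp t p i j = p i j"
        unfolding Tstar_def by (simp add: sums_iff)
    qed
  qed
qed

end
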